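(* Let $A\in\mathbb{R}^{m\times n}$ with columns $A_1,\dots,A_n$, let $y\in\mathbb{R}^m$, $\gamma>0$ and $k\in\{1,\dots,n-1\}$. Let $x^*$ be an optimal solution of (CC) with optimal value $\zeta_{CC}$, set $\varepsilon^*=y-Ax^*$ and $\delta_i=(A_i'\varepsilon^* )^2$ for $i=1,\dots,n$, let $\delta_{[j]}$ denote the $j$-th largest entry of the vector $\delta=(\delta_1,\dots,\delta_n)$, and let $\bar\zeta$ be any number with $\bar\zeta\ge\zeta_C$. Then every optimal solution $(x,z)$ of (MIPC) satisfies, for each $i$: $z_i=0$ if $\delta_i\le\delta_{[k+1]}$ and $\zeta_{CC}-\gamma(\delta_i-\delta_{[k]})>\bar\zeta$; and $z_i=1$ if $\delta_i\ge\delta_{[k]}$ and $\zeta_{CC}+\gamma(\delta_i-\delta_{[k+1]})>\bar\zeta$.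
   Context: For $x_i\in\mathbb{R}$, $z_i\ge 0$ the perspective term $x_i^2/z_i$ is defined with the convention $x_i^2/z_i=0$ if $x_i=z_i=0$ and $x_i^2/z_i=+\infty$ if $z_i=0$, $x_i\neq 0$. (MIPC) is the problem $\zeta_C=\min_{x,z}\ \|y-Ax\|_2^2+\frac1\gamma\sum_{i=1}^n \frac{x_i^2}{z_i}$ subject to $\sum_{i=1}^n z_i\le k$, $x_i(1-z_i)=0$ for $i=1,\dots,n$, $x\in\mathbb{R}^n$, $z\in\{0,1\}^n$ (a mixed-integer formulation of $\min_x \|y-Ax\|_2^2+\frac1\gamma\|x\|_2^2$ s.t. $\|x\|_0\le k$). (CC) is its convex (perspective) relaxation: $\zeta_{CC}=\min_{x,z}\ \|y-Ax\|_2^2+\frac1\gamma\sum_{i=1}^n \frac{x_i^2}{z_i}$ subject to $\sum_{i=1}^n z_i\le k$, $x\in\mathbb{R}^n$, $z\in[0,1]^n$; an optimal solution $x^*$ means the $x$-part of an optimal pair $(x^*,z^* )$. $A_i'$ denotes the transpose of the $i$-th column of $A$. *)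

theory Defs
  imports "HOL-Analysis.Analysis" "HOL-Library.Multiset" "HOL-Library.Extended_Real"
begin

definition persp :: "real \<Rightarrow> real \<Rightarrow> ereal" where
  "persp a b = (if b = 0 then (if a = 0 then 0 else \<infinity>) else ereal (a^2 / b))"

definition obj :: "real^'n^'m \<Rightarrow> real^'m \<Rightarrow> real \<Rightarrow> real^'n \<Rightarrow> real^'n \<Rightarrow> ereal" where
  "obj A y \<gamma> x z = ereal ((norm (y - A *v x))^2) + ereal (1/\<gamma>) * (\<Sum>i\<in>UNIV. persp (x$i) (z$i))"

definition feas_MIPC :: "nat \<Rightarrow> real^'n \<Rightarrow> real^'n \<Rightarrow> bool" where
  "feas_MIPC k x z \<longleftrightarrow> (\<Sum>i\<in>UNIV. z$i) \<le> real k \<and>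
     (\<forall>i. x$i * (1 - z$i) = 0) \<and> (\<forall>i. z$i \<in> {0,1})"

definition feas_CC :: "nat \<Rightarrow> real^'n \<Rightarrow> real^'n \<Rightarrow> bool" where
  "feas_CC k x z \<longleftrightarrow> (\<Sum>i\<in>UNIV. z$i) \<le> real k \<and> (\<forall>i. 0 \<le> z$i \<and> z$i \<le> 1)"

definition zeta_C :: "real^'n^'m \<Rightarrow> real^'m \<Rightarrow> real \<Rightarrow> nat \<Rightarrow> ereal" where
  "zeta_C A y \<gamma> k = (INF p\<in>{(x,z). feas_MIPC k x z}. obj A y \<gamma> (fst p) (snd p))"

definition zeta_CC :: "real^'n^'m \<Rightarrow> real^'m \<Rightarrow> real \<Rightarrow> nat \<Rightarrow> ereal" where
  "zeta_CC A y \<gamma> k = (INF p\<in>{(x,z). feas_CC k x z}. obj A y \<gamma> (fst p) (snd p))"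

definition opt_MIPC :: "real^'n^'m \<Rightarrow> real^'m \<Rightarrow> real \<Rightarrow> nat \<Rightarrow> real^'n \<Rightarrow> real^'n \<Rightarrow> bool" where
  "opt_MIPC A y \<gamma> k x z \<longleftrightarrow> feas_MIPC k x z \<and> obj A y \<gamma> x z = zeta_C A y \<gamma> k"

definition opt_CC :: "real^'n^'m \<Rightarrow> real^'m \<Rightarrow> real \<Rightarrow> nat \<Rightarrow> real^'n \<Rightarrow> real^'n \<Rightarrow> bool" where
  "opt_CC A y \<gamma> k x z \<longleftrightarrow> feas_CC k x z \<and> obj A y \<gamma> x z = zeta_CC A y \<gamma> k"

definition kth_largest :: "real^'n \<Rightarrow> nat \<Rightarrow> real" where
  "kth_largest d j = rev (sorted_list_of_multiset (image_mset (\<lambda>i. d$i) (mset_set (UNIV::'n set)))) ! (j - 1)"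

end

theory Submission
  imports Defs
begin


lemma inner_Av:
  fixes A :: "real^'n^'m"
  shows "al \<bullet> (A *v v) = (\<Sum>j\<in>UNIV. v$j * (column j A \<bullet> al))"
proof -
  have "al \<bullet> (A *v v) = (\<Sum>r\<in>UNIV. al$r * (\<Sum>j\<in>UNIV. A$r$j * v$j))"
    by (simp add: inner_vec_def matrix_vector_mult_def)
  also have "\<dots> = (\<Sum>r\<in>UNIV. \<Sum>j\<in>UNIV. v$j * (A$r$j * al$r))"
    by (simp add: sum_distrib_left mult_ac)
  also have "\<dots> = (\<Sum>j\<in>UNIV. \<Sum>r\<in>UNIV. v$j * (A$r$j * al$r))"
    by (rule sum.swap)
  also have "\<dots> = (\<Sum>j\<in>UNIV. v$j * (column j A \<bullet> al))"
    by (simp add: inner_vec_def column_def sum_distrib_left)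
  finally show ?thesis .
qed

lemma amgm:
  fixes x z c :: real
  assumes "z \<ge> 0" "z = 0 \<longrightarrow> x = 0"
  shows "2*x*c - c^2*z \<le> x^2/z"
proof (cases "z = 0")
  case True then show ?thesis using assms by simp
next
  case False
  then have zp: "z > 0" using assms by simp
  have "0 \<le> (x - c*z)^2/z" using zp by simp
  also have "(x - c*z)^2/z = x^2/z - 2*x*c + c^2*z" using zp
    by (simp add: power2_eq_square field_simps)
  finally show ?thesis by simp
qed

lemma persp_convex:
  fixes x x' z z' t :: real
  assumes "z \<ge> 0" "z' \<ge> 0" "z = 0 \<longrightarrow> x = 0" "z' = 0 \<longrightarrow> x' = 0" "0 \<le> t" "t \<le> 1"
  shows "((1-t)*x + t*x')^2/((1-t)*z + t*z') \<le> (1-t)*(x^2/z) + t*(x'^2/z')"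
proof (cases "(1-t)*z + t*z' = 0")
  case True
  have "0 \<le> x^2/z" "0 \<le> x'^2/z'" using assms by auto
  then show ?thesis using True assms by simp
next
  case False
  define Z where "Z = (1-t)*z + t*z'"
  define X where "X = (1-t)*x + t*x'"
  have Zp: "Z > 0" using False assms unfolding Z_def
    by (smt (verit) mult_nonneg_nonneg)
  define c where "c = X/Z"
  have "X^2/Z = 2*X*c - c^2*Z" using Zp unfolding c_def by (simp add: power2_eq_square field_simps)
  also have "\<dots> = (1-t)*(2*x*c - c^2*z) + t*(2*x'*c - c^2*z')"
    unfolding X_def Z_def by (simp add: algebra_simps)
  also have "\<dots> \<le> (1-t)*(x^2/z) + t*(x'^2/z')"
    using amgm[OF assms(1,3), of c] amgm[OF assms(2,4), of c] assms(5,6)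
    by (intro add_mono mult_left_mono) auto
  finally show ?thesis unfolding X_def Z_def .
qed

lemma small_t:
  fixes B C :: real
  assumes "\<And>t. 0 < t \<Longrightarrow> t < 1 \<Longrightarrow> 0 \<le> t*B + t^2*C"
  shows "0 \<le> B"
proof (rule ccontr)
  assume "\<not> 0 \<le> B"
  then have Bn: "B < 0" by simp
  define t where "t = min (1/2) (-B/(2*(\<bar>C\<bar>+1)))"
  have tp: "0 < t" "t < 1" using Bn unfolding t_def by (auto simp: field_simps)
  have "t \<le> -B/(2*(\<bar>C\<bar>+1))" unfolding t_def by simp
  then have "t*(2*(\<bar>C\<bar>+1)) \<le> -B" by (simp add: field_simps)
  moreover have "t*C \<le> t*(\<bar>C\<bar>+1)" using tp by (intro mult_left_mono) auto
  moreover have "t*(\<bar>C\<bar>+1) < t*(2*(\<bar>C\<bar>+1))" using tp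
    by (intro mult_strict_left_mono) auto
  ultimately have "t*C < -B" by linarith
  then have "B + t*C < 0" by simp
  then have "t*(B + t*C) < 0" using tp by (simp add: mult_pos_neg)
  moreover have "0 \<le> t*(B+t*C)" using assms[OF tp] by (simp add: power2_eq_square algebra_simps)
  ultimately show False by simp
qed

lemma obj_real:
  assumes "\<forall>j. z$j \<ge> 0" "\<forall>j. z$j = 0 \<longrightarrow> x$j = 0"
  shows "obj A y \<gamma> x z = ereal ((norm (y - A *v x))^2 + (1/\<gamma>) * (\<Sum>j\<in>UNIV. (x$j)^2/(z$j)))"
proof -
  have "persp (x$j) (z$j) = ereal ((x$j)^2/(z$j))" for j
    using assms by (auto simp: persp_def)
  then show ?thesis unfolding obj_def by simp
qed



lemma count_list:
  fixes d :: "real^'n"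
  defines "L \<equiv> rev (sorted_list_of_multiset (image_mset (\<lambda>i. d$i) (mset_set (UNIV::'n set))))"
  shows "length (filter P L) = card {j. P (d$j)}" "length L = CARD('n)"
proof -
  have "length (filter P L) = size (filter_mset P (mset L))"
    by (metis mset_filter size_mset)
  also have "mset L = image_mset (\<lambda>i. d$i) (mset_set (UNIV::'n set))"
    unfolding L_def by simp
  also have "size (filter_mset P (image_mset (\<lambda>i. d$i) (mset_set (UNIV::'n set))))
     = size (filter_mset (\<lambda>i. P (d$i)) (mset_set (UNIV::'n set)))"
    by (simp add: filter_mset_image_mset)
  also have "\<dots> = card {j. P (d$j)}" by simp
  finally show "length (filter P L) = card {j. P (d$j)}" .
  have "length L = size (mset L)" by simp
  also have "mset L = image_mset (\<lambda>i. d$i) (mset_set (UNIV::'n set))"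
    unfolding L_def by simp
  finally show "length L = CARD('n)" by simp
qed

lemma desc_nth:
  fixes S :: "real list"
  assumes "sorted S" "q \<le> p" "p < length S"
  shows "rev S ! p \<le> rev S ! q"
  using assms by (simp add: rev_nth sorted_nth_mono)

lemma kth_ge:
  fixes d :: "real^'n"
  assumes "1 \<le> k" "k \<le> CARD('n)"
  shows "k \<le> card {j. d$j \<ge> kth_largest d k}"
proof -
  define S where "S = sorted_list_of_multiset (image_mset (\<lambda>i. d$i) (mset_set (UNIV::'n set)))"
  define L where "L = rev S"
  have len: "length L = CARD('n)" unfolding L_def S_def using count_list(2) by blast
  have kl: "kth_largest d k = L ! (k-1)" unfolding kth_largest_def L_def S_def by simp
  have srt: "sorted S" unfolding S_def by simp
  have "{0..<k} \<subseteq> {i. i < length L \<and> L!(k-1) \<le> L!i}"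
    using assms len desc_nth[OF srt] unfolding L_def by auto
  then have "k \<le> card {i. i < length L \<and> L!(k-1) \<le> L!i}"
    by (metis card_atLeastLessThan card_mono finite_Collect_conjI finite_Collect_less_nat minus_nat.diff_0)
  also have "\<dots> = length (filter (\<lambda>v. L!(k-1) \<le> v) L)" by (simp add: length_filter_conv_card)
  also have "\<dots> = card {j. L!(k-1) \<le> d$j}" unfolding L_def S_def by (rule count_list(1))
  finally show ?thesis using kl by simp
qed

lemma kth_gt:
  fixes d :: "real^'n"
  assumes "k < CARD('n)"
  shows "card {j. d$j > kth_largest d (k+1)} \<le> k"
proof -
  define S where "S = sorted_list_of_multiset (image_mset (\<lambda>i. d$i) (mset_set (UNIV::'n set)))"
  define L where "L = rev S"
  have len: "length L = CARD('n)" unfolding L_def S_def using count_list(2) by blast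
  have kl: "kth_largest d (k+1) = L ! k" unfolding kth_largest_def L_def S_def by simp
  have srt: "sorted S" unfolding S_def by simp
  have sub: "{i. i < length L \<and> L!k < L!i} \<subseteq> {0..<k}"
  proof
    fix i assume "i \<in> {i. i < length L \<and> L!k < L!i}"
    then have "i < length L" "L!k < L!i" by auto
    then show "i \<in> {0..<k}" using desc_nth[OF srt, of k i] len assms unfolding L_def
      by (cases "k \<le> i") auto
  qed
  have "card {j. L!k < d$j} = length (filter (\<lambda>v. L!k < v) L)"
    unfolding L_def S_def by (rule count_list(1)[symmetric])
  also have "\<dots> = card {i. i < length L \<and> L!k < L!i}" by (simp add: length_filter_conv_card)
  also have "\<dots> \<le> k" using card_mono[OF _ sub] by simp
  finally show ?thesis using kl by simp
qed

lemma kth_in: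
  fixes d :: "real^'n"
  assumes "k < CARD('n)"
  shows "\<exists>j. kth_largest d (k+1) = d$j"
proof -
  define S where "S = sorted_list_of_multiset (image_mset (\<lambda>i. d$i) (mset_set (UNIV::'n set)))"
  have len: "length (rev S) = CARD('n)" unfolding S_def using count_list(2) by blast
  have "kth_largest d (k+1) = rev S ! k" unfolding kth_largest_def S_def by simp
  moreover have "rev S ! k \<in> set (rev S)" using len assms by (intro nth_mem) simp
  moreover have "set (rev S) = set_mset (image_mset (\<lambda>i. d$i) (mset_set (UNIV::'n set)))"
    unfolding S_def by simp
  ultimately show ?thesis by auto
qed



definition Pen :: "real \<Rightarrow> real^'n \<Rightarrow> real^'n \<Rightarrow> real" where
  "Pen \<gamma> x z = (1/\<gamma>) * (\<Sum>j\<in>UNIV. (x$j)^2/(z$j))"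

lemma weak_dual:
  fixes A :: "real^'n^'m"
  assumes "\<gamma> > 0" "\<forall>j. z$j \<ge> 0" "\<forall>j. z$j = 0 \<longrightarrow> x$j = 0"
  shows "2*(al \<bullet> y) - al \<bullet> al - \<gamma> * (\<Sum>j\<in>UNIV. z$j * (column j A \<bullet> al)^2)
     \<le> (norm (y - A *v x))^2 + Pen \<gamma> x z"
proof -
  define w where "w = y - A *v x"
  have "0 \<le> (w - al) \<bullet> (w - al)" by simp
  then have n1: "2*(al \<bullet> w) - al \<bullet> al \<le> (norm w)^2"
    by (simp add: power2_norm_eq_inner inner_diff inner_commute algebra_simps)
  have t: "2 * (x$j) * (column j A \<bullet> al) - \<gamma> * (z$j * (column j A \<bullet> al)^2) \<le> (1/\<gamma>) * ((x$j)^2/(z$j))" for j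
  proof -
    have "2*(x$j)*(\<gamma> * (column j A \<bullet> al)) - (\<gamma> * (column j A \<bullet> al))^2*(z$j) \<le> (x$j)^2/(z$j)"
      using assms by (intro amgm) auto
    then have "(1/\<gamma>) * (2*(x$j)*(\<gamma> * (column j A \<bullet> al)) - (\<gamma> * (column j A \<bullet> al))^2*(z$j))
       \<le> (1/\<gamma>) * ((x$j)^2/(z$j))" using assms(1) by (intro mult_left_mono) auto
    moreover have "(1/\<gamma>) * (2*(x$j)*(\<gamma> * (column j A \<bullet> al)) - (\<gamma> * (column j A \<bullet> al))^2*(z$j))
       = 2 * (x$j) * (column j A \<bullet> al) - \<gamma> * (z$j * (column j A \<bullet> al)^2)"
      using assms(1) by (simp add: power2_eq_square field_simps)
    ultimately show ?thesis by simp
  qed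
  have "(\<Sum>j\<in>UNIV. 2 * (x$j) * (column j A \<bullet> al) - \<gamma> * (z$j * (column j A \<bullet> al)^2))
       \<le> (\<Sum>j\<in>UNIV. (1/\<gamma>) * ((x$j)^2/(z$j)))"
    by (rule sum_mono) (rule t)
  then have p1: "2 * (al \<bullet> (A *v x)) - \<gamma> * (\<Sum>j\<in>UNIV. z$j * (column j A \<bullet> al)^2) \<le> Pen \<gamma> x z"
    unfolding Pen_def inner_Av by (simp add: sum_subtractf sum_distrib_left mult_ac)
  have "al \<bullet> w = al \<bullet> y - al \<bullet> (A *v x)" unfolding w_def by (simp add: inner_diff_right)
  then show ?thesis using n1 p1 unfolding w_def by linarith
qed


lemma foc:
  fixes A :: "real^'n^'m"
  assumes g: "\<gamma> > 0"
  and opt: "\<And>x z. feas_CC k x z \<Longrightarrow> (\<forall>j. z$j = 0 \<longrightarrow> x$j = 0) \<Longrightarrow>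
      (norm (y - A *v xs))^2 + Pen \<gamma> xs zs \<le> (norm (y - A *v x))^2 + Pen \<gamma> x z"
  and fs: "feas_CC k xs zs" "\<forall>j. zs$j = 0 \<longrightarrow> xs$j = 0"
  and f': "feas_CC k x' z'" "\<forall>j. z'$j = 0 \<longrightarrow> x'$j = 0"
  shows "2*((y - A *v xs) \<bullet> (A *v x')) - Pen \<gamma> x' z' \<le> 2*((y - A *v xs) \<bullet> (A *v xs)) - Pen \<gamma> xs zs"
proof -
  define al where "al = y - A *v xs"
  define Ad where "Ad = A *v (x' - xs)"
  have key: "0 \<le> t*(-2*(al \<bullet> Ad) - Pen \<gamma> xs zs + Pen \<gamma> x' z') + t^2*(Ad \<bullet> Ad)"
    if t: "0 < t" "t < 1" for t
  proof -
    define xt where "xt = xs + t *\<^sub>R (x' - xs)"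
    define zt where "zt = zs + t *\<^sub>R (z' - zs)"
    have xtj: "xt$j = (1-t)*xs$j + t*x'$j" for j unfolding xt_def by (simp add: algebra_simps)
    have ztj: "zt$j = (1-t)*zs$j + t*z'$j" for j unfolding zt_def by (simp add: algebra_simps)
    have zs0: "0 \<le> zs$j" "zs$j \<le> 1" "0 \<le> z'$j" "z'$j \<le> 1" for j
      using fs(1) f'(1) unfolding feas_CC_def by auto
    have sk: "(\<Sum>j\<in>UNIV. zs$j) \<le> real k" "(\<Sum>j\<in>UNIV. z'$j) \<le> real k"
      using fs(1) f'(1) unfolding feas_CC_def by auto
    have "(\<Sum>j\<in>UNIV. zt$j) = (1-t)*(\<Sum>j\<in>UNIV. zs$j) + t*(\<Sum>j\<in>UNIV. z'$j)"
      unfolding ztj by (simp add: sum.distrib sum_distrib_left)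
    also have "\<dots> \<le> (1-t)*real k + t*real k"
      using sk t by (intro add_mono mult_left_mono) auto
    finally have s1: "(\<Sum>j\<in>UNIV. zt$j) \<le> real k" by (simp add: algebra_simps)
    have b1: "0 \<le> zt$j \<and> zt$j \<le> 1" for j
    proof -
      have "0 \<le> (1-t)*zs$j" "0 \<le> t*z'$j" using zs0 t by auto
      moreover have "(1-t)*zs$j \<le> (1-t)" "t*z'$j \<le> t" using zs0[of j] t
        by (auto intro: mult_left_le)
      ultimately show ?thesis unfolding ztj by linarith
    qed
    have ft: "feas_CC k xt zt" unfolding feas_CC_def using s1 b1 by auto
    have ct: "\<forall>j. zt$j = 0 \<longrightarrow> xt$j = 0"
    proof (intro allI impI)
      fix j assume "zt$j = 0"
      then have "(1-t)*zs$j + t*z'$j = 0" unfolding ztj .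
      moreover have "0 \<le> (1-t)*zs$j" "0 \<le> t*z'$j" using zs0 t by auto
      ultimately have "(1-t)*zs$j = 0" "t*z'$j = 0" by linarith+
      then have "zs$j = 0" "z'$j = 0" using t by auto
      then show "xt$j = 0" using fs(2) f'(2) unfolding xtj by auto
    qed
    have "y - A *v xt = al - t *\<^sub>R Ad"
      unfolding xt_def al_def Ad_def by (simp add: matrix_vector_right_distrib matrix_vector_mult_scaleR)
    then have "(norm (y - A *v xt))^2 = (al - t *\<^sub>R Ad) \<bullet> (al - t *\<^sub>R Ad)"
      by (simp add: power2_norm_eq_inner)
    also have "\<dots> = al \<bullet> al - 2*t*(al \<bullet> Ad) + t^2*(Ad \<bullet> Ad)"
      by (simp add: inner_diff_left inner_diff_right inner_commute power2_eq_square algebra_simps)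
    finally have nt: "(norm (y - A *v xt))^2 = al \<bullet> al - 2*t*(al \<bullet> Ad) + t^2*(Ad \<bullet> Ad)" .
    have "(\<Sum>j\<in>UNIV. (xt$j)^2/(zt$j)) \<le> (\<Sum>j\<in>UNIV. (1-t)*((xs$j)^2/(zs$j)) + t*((x'$j)^2/(z'$j)))"
      unfolding xtj ztj using zs0 fs(2) f'(2) t by (intro sum_mono persp_convex) auto
    also have "\<dots> = (1-t)*(\<Sum>j\<in>UNIV. (xs$j)^2/(zs$j)) + t*(\<Sum>j\<in>UNIV. (x'$j)^2/(z'$j))"
      by (simp add: sum.distrib sum_distrib_left)
    finally have "(1/\<gamma>)*(\<Sum>j\<in>UNIV. (xt$j)^2/(zt$j)) \<le>
        (1/\<gamma>)*((1-t)*(\<Sum>j\<in>UNIV. (xs$j)^2/(zs$j)) + t*(\<Sum>j\<in>UNIV. (x'$j)^2/(z'$j)))"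
      using g by (intro mult_left_mono) auto
    then have pt: "Pen \<gamma> xt zt \<le> (1-t)*Pen \<gamma> xs zs + t*Pen \<gamma> x' z'"
      unfolding Pen_def by (simp only: ring_distribs mult_ac)
    have "(norm al)^2 + Pen \<gamma> xs zs \<le> (norm (y - A *v xt))^2 + Pen \<gamma> xt zt"
      using opt[OF ft ct] unfolding al_def .
    then have "al \<bullet> al + Pen \<gamma> xs zs \<le> al \<bullet> al - 2*t*(al \<bullet> Ad) + t^2*(Ad \<bullet> Ad) + ((1-t)*Pen \<gamma> xs zs + t*Pen \<gamma> x' z')"
      using nt pt by (simp add: power2_norm_eq_inner)
    then show ?thesis by (simp add: algebra_simps)
  qed
  have "0 \<le> -2*(al \<bullet> Ad) - Pen \<gamma> xs zs + Pen \<gamma> x' z'"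
    by (rule small_t) (rule key)
  moreover have "al \<bullet> Ad = al \<bullet> (A *v x') - al \<bullet> (A *v xs)"
    unfolding Ad_def by (simp add: matrix_vector_mult_diff_distrib inner_diff_right)
  ultimately show ?thesis unfolding al_def by linarith
qed



lemma sum_indicator_vec:
  fixes T :: "'n::finite set" and f :: "'n \<Rightarrow> real"
  shows "(\<Sum>j\<in>UNIV. (if j \<in> T then 1 else 0) * f j) = (\<Sum>j\<in>T. f j)"
proof -
  have "(\<Sum>j\<in>UNIV. (if j \<in> T then 1 else 0) * f j) = (\<Sum>j\<in>UNIV. if j \<in> T then f j else 0)"
    by (intro sum.cong) auto
  also have "\<dots> = sum f (UNIV \<inter> T)" by (rule sum.inter_restrict[symmetric]) simp
  finally show ?thesis by simp
qed

lemma comb_case1: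
  fixes d :: "'n::finite \<Rightarrow> real"
  assumes "i \<in> S" "card S \<le> k" "k \<le> card {j. d j \<ge> L}"
  shows "\<exists>T. card T \<le> k \<and> sum d T - sum d S \<ge> L - d i"
proof -
  have c1: "card (S - {i}) = card S - 1" using assms(1) by simp
  have c2: "card S > 0" using assms(1) by (auto simp: card_gt_0_iff)
  have cS: "card (S - {i}) < k" using c1 c2 assms(2) by linarith
  have "\<not> {j. d j \<ge> L} \<subseteq> S - {i}"
  proof
    assume "{j. d j \<ge> L} \<subseteq> S - {i}"
    then have "card {j. d j \<ge> L} \<le> card (S - {i})" by (intro card_mono) auto
    then show False using cS assms(3) by linarith
  qed
  then obtain j where j: "d j \<ge> L" "j \<notin> S - {i}" by auto
  define T where "T = insert j (S - {i})"
  have "card T = Suc (card (S - {i}))" unfolding T_def using j by simp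
  then have cT: "card T \<le> k" using cS by simp
  have "sum d T = d j + sum d (S - {i})" unfolding T_def using j by simp
  also have "sum d (S - {i}) = sum d S - d i" using assms(1) by (simp add: sum_diff1)
  finally have "sum d T - sum d S = d j - d i" by simp
  then have "card T \<le> k \<and> sum d T - sum d S \<ge> L - d i" using cT j(1) by linarith
  then show ?thesis by blast
qed

lemma comb_case2:
  fixes d :: "'n::finite \<Rightarrow> real"
  assumes "i \<notin> S" "card S \<le> k" "card {j. d j > L} \<le> k" "0 \<le> L"
  shows "\<exists>T. card T \<le> k \<and> sum d T - sum d S \<ge> d i - L"
proof (cases "card S < k")
  case True
  define T where "T = insert i S"
  have "card T \<le> k" unfolding T_def using True assms(1) by simp
  moreover have "sum d T - sum d S = d i" unfolding T_def using assms(1) by simp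
  ultimately have "card T \<le> k \<and> sum d T - sum d S \<ge> d i - L" using assms(4) by linarith
  then show ?thesis by blast
next
  case False
  then have cS: "card S = k" using assms(2) by simp
  define U where "U = insert i S"
  have cU: "card U = Suc k" unfolding U_def using assms(1) cS by simp
  have "\<not> U \<subseteq> {j. d j > L}"
  proof
    assume "U \<subseteq> {j. d j > L}"
    then have "card U \<le> card {j. d j > L}" by (intro card_mono) auto
    then show False using cU assms(3) by linarith
  qed
  then obtain m where m0: "m \<in> U" "\<not> d m > L" by blast
  then have m: "m \<in> U" "d m \<le> L" by auto
  define T where "T = U - {m}"
  have "card T = k" unfolding T_def using m cU by simp
  moreover have "sum d T = sum d U - d m" unfolding T_def using m by (simp add: sum_diff1)
  moreover have "sum d U = d i + sum d S" unfolding U_def using assms(1) by simp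
  ultimately have "card T \<le> k \<and> sum d T - sum d S \<ge> d i - L" using m(2) by linarith
  then show ?thesis by blast
qed



lemma obj_inf:
  assumes g: "\<gamma> > 0" and j: "z$j = 0" "x$j \<noteq> 0" and nn: "\<forall>j. z$j \<ge> 0"
  shows "obj A y \<gamma> x z = \<infinity>"
proof -
  have "(\<Sum>j\<in>UNIV. persp (x$j) (z$j)) = \<infinity>"
    unfolding sum_Pinfty using j by (auto simp: persp_def)
  then show ?thesis unfolding obj_def using g by simp
qed

theorem proposition2:
  fixes A :: "real^'n^'m" and y :: "real^'m" and \<gamma> :: real and k :: nat
    and xs zs :: "real^'n" and zbar :: real and x z :: "real^'n" and i :: 'n
  assumes "\<gamma> > 0" and "1 \<le> k" and "k \<le> CARD('n) - 1"
    and "opt_CC A y \<gamma> k xs zs"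
    and "ereal zbar \<ge> zeta_C A y \<gamma> k"
    and "opt_MIPC A y \<gamma> k x z"
  defines "\<delta> \<equiv> (\<chi> j. (column j A \<bullet> (y - A *v xs))^2)"
  shows "(\<delta>$i \<le> kth_largest \<delta> (k+1) \<and>
            zeta_CC A y \<gamma> k - ereal (\<gamma> * (\<delta>$i - kth_largest \<delta> k)) > ereal zbar \<longrightarrow> z$i = 0)
       \<and> (\<delta>$i \<ge> kth_largest \<delta> k \<and>
            zeta_CC A y \<gamma> k + ereal (\<gamma> * (\<delta>$i - kth_largest \<delta> (k+1))) > ereal zbar \<longrightarrow> z$i = 1)"
proof -
  note g = assms(1)
  define al where "al = y - A *v xs"
  define a where "a j = column j A \<bullet> al" for j
  have dj: "\<delta>$j = (a j)^2" for j unfolding \<delta>_def a_def al_def by simp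
  have fs: "feas_CC k xs zs" and os: "obj A y \<gamma> xs zs = zeta_CC A y \<gamma> k"
    using assms(4) unfolding opt_CC_def by auto
  have zsnn: "\<forall>j. zs$j \<ge> 0" using fs unfolding feas_CC_def by auto
  have infl: "zeta_CC A y \<gamma> k \<le> obj A y \<gamma> x' z'" if "feas_CC k x' z'" for x' z'
  proof -
    have m: "(x', z') \<in> {(x,z). feas_CC k x z}" using that by simp
    show ?thesis unfolding zeta_CC_def
      using INF_lower[OF m, of "\<lambda>p. obj A y \<gamma> (fst p) (snd p)"] by simp
  qed
  have f00: "feas_CC k 0 0" unfolding feas_CC_def by simp
  have "obj A y \<gamma> 0 0 = ereal ((norm y)^2)"
    by (subst obj_real) auto
  then have osf: "obj A y \<gamma> xs zs \<noteq> \<infinity>" using infl[OF f00] os by auto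
  have cs: "\<forall>j. zs$j = 0 \<longrightarrow> xs$j = 0"
  proof (intro allI impI)
    fix j assume "zs$j = 0"
    show "xs$j = 0"
    proof (rule ccontr)
      assume "xs$j \<noteq> 0"
      then have "obj A y \<gamma> xs zs = \<infinity>" using obj_inf[OF g \<open>zs$j = 0\<close> _ zsnn] by blast
      then show False using osf by simp
    qed
  qed
  define Q where "Q x' z' = (norm (y - A *v x'))^2 + Pen \<gamma> x' z'" for x' z'
  have objQ: "obj A y \<gamma> x' z' = ereal (Q x' z')" if "\<forall>j. z'$j \<ge> 0" "\<forall>j. z'$j = 0 \<longrightarrow> x'$j = 0" for x' z'
    unfolding Q_def Pen_def using obj_real[OF that] .
  define c where "c = Q xs zs"
  have zCC: "zeta_CC A y \<gamma> k = ereal c" using os objQ[OF zsnn cs] unfolding c_def by simp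
  have opt: "Q xs zs \<le> Q x' z'" if "feas_CC k x' z'" "\<forall>j. z'$j = 0 \<longrightarrow> x'$j = 0" for x' z'
  proof -
    have "\<forall>j. z'$j \<ge> 0" using that(1) unfolding feas_CC_def by auto
    then have "obj A y \<gamma> x' z' = ereal (Q x' z')" using objQ that(2) by blast
    then have "ereal (Q xs zs) \<le> ereal (Q x' z')"
      using infl[OF that(1)] zCC unfolding c_def by simp
    then show ?thesis by simp
  qed
  have fm: "feas_MIPC k x z" and om: "obj A y \<gamma> x z = zeta_C A y \<gamma> k"
    using assms(6) unfolding opt_MIPC_def by auto
  have z01: "z$j = 0 \<or> z$j = 1" for j using fm unfolding feas_MIPC_def by auto
  have znn: "\<forall>j. z$j \<ge> 0" proof
    fix j show "z$j \<ge> 0" using z01[of j] by auto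
  qed
  have cz: "\<forall>j. z$j = 0 \<longrightarrow> x$j = 0" proof (intro allI impI)
    fix j assume "z$j = 0"
    moreover have "x$j * (1 - z$j) = 0" using fm unfolding feas_MIPC_def by blast
    ultimately show "x$j = 0" by simp
  qed
  define V where "V = Q x z"
  have "ereal V \<le> ereal zbar" using om objQ[OF znn cz] assms(5) unfolding V_def by simp
  then have Vle: "V \<le> zbar" by simp
  define S where "S = {j. z$j = 1}"
  have sumz: "(\<Sum>j\<in>UNIV. z$j * \<delta>$j) = sum (\<lambda>j. \<delta>$j) S"
  proof -
    have "(\<Sum>j\<in>UNIV. z$j * \<delta>$j) = (\<Sum>j\<in>UNIV. (if j \<in> S then 1 else 0) * \<delta>$j)"
    proof (intro sum.cong refl)
      fix j show "z$j * \<delta>$j = (if j \<in> S then 1 else 0) * \<delta>$j"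
        using z01[of j] unfolding S_def by auto
    qed
    then show ?thesis using sum_indicator_vec[of S "\<lambda>j. \<delta>$j"] by simp
  qed
  have cardS: "card S \<le> k"
  proof -
    have "(\<Sum>j\<in>UNIV. z$j) = (\<Sum>j\<in>UNIV. (if j \<in> S then 1 else 0) * 1)"
    proof (intro sum.cong refl)
      fix j show "z$j = (if j \<in> S then 1 else 0) * 1"
        using z01[of j] unfolding S_def by auto
    qed
    also have "\<dots> = real (card S)" using sum_indicator_vec[of S "\<lambda>_. 1"] by simp
    finally show ?thesis using fm unfolding feas_MIPC_def by simp
  qed
  have bound: "V \<ge> c + \<gamma> * (sum (\<lambda>j. \<delta>$j) T - sum (\<lambda>j. \<delta>$j) S)" if cT: "card T \<le> k" for T
  proof -
    define z' :: "real^'n" where "z' = (\<chi> j. if j \<in> T then 1 else 0)"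
    define x' :: "real^'n" where "x' = (\<chi> j. \<gamma> * z'$j * a j)"
    have f': "feas_CC k x' z'"
    proof -
      have "(\<Sum>j\<in>UNIV. z'$j) = (\<Sum>j\<in>UNIV. (if j \<in> T then 1 else 0) * 1)" unfolding z'_def by simp
      also have "\<dots> = real (card T)" using sum_indicator_vec[of T "\<lambda>_. 1"] by simp
      finally show ?thesis using cT unfolding feas_CC_def z'_def by auto
    qed
    have c': "\<forall>j. z'$j = 0 \<longrightarrow> x'$j = 0" unfolding x'_def by simp
    have F: "2*(al \<bullet> (A *v x')) - Pen \<gamma> x' z' \<le> 2*(al \<bullet> (A *v xs)) - Pen \<gamma> xs zs"
      unfolding al_def by (rule foc[OF g opt[unfolded Q_def] fs cs f' c'])
    have i1: "al \<bullet> (A *v x') = \<gamma> * sum (\<lambda>j. \<delta>$j) T"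
    proof -
      have "al \<bullet> (A *v x') = (\<Sum>j\<in>UNIV. x'$j * a j)" unfolding inner_Av a_def ..
      also have "\<dots> = (\<Sum>j\<in>UNIV. (if j \<in> T then 1 else 0) * (\<gamma> * \<delta>$j))"
        unfolding x'_def z'_def dj by (intro sum.cong) (auto simp: power2_eq_square)
      also have "\<dots> = \<gamma> * sum (\<lambda>j. \<delta>$j) T" by (simp add: sum_indicator_vec sum_distrib_left)
      finally show ?thesis .
    qed
    have p1: "Pen \<gamma> x' z' = \<gamma> * sum (\<lambda>j. \<delta>$j) T"
    proof -
      have "(\<Sum>j\<in>UNIV. (x'$j)^2/(z'$j)) = (\<Sum>j\<in>UNIV. (if j \<in> T then 1 else 0) * (\<gamma>^2 * \<delta>$j))"
        unfolding x'_def z'_def dj by (intro sum.cong) (auto simp: power2_eq_square)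
      also have "\<dots> = \<gamma>^2 * sum (\<lambda>j. \<delta>$j) T" by (simp add: sum_indicator_vec sum_distrib_left)
      finally show ?thesis unfolding Pen_def using g by (simp add: power2_eq_square)
    qed
    have W: "2*(al \<bullet> y) - al \<bullet> al - \<gamma> * (\<Sum>j\<in>UNIV. z$j * (a j)^2) \<le> V"
      using weak_dual[OF g znn cz, of al y A] unfolding V_def Q_def a_def by simp
    have "(\<Sum>j\<in>UNIV. z$j * (a j)^2) = sum (\<lambda>j. \<delta>$j) S" using sumz by (simp add: dj)
    then have W': "2*(al \<bullet> y) - al \<bullet> al - \<gamma> * sum (\<lambda>j. \<delta>$j) S \<le> V" using W by simp
    have "al \<bullet> y = al \<bullet> al + al \<bullet> (A *v xs)"
    proof -
      have "y = al + A *v xs" unfolding al_def by simp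
      then show ?thesis by (metis inner_add_right)
    qed
    moreover have "c = al \<bullet> al + Pen \<gamma> xs zs"
      unfolding c_def Q_def al_def by (simp add: power2_norm_eq_inner)
    ultimately have "V \<ge> c + \<gamma> * sum (\<lambda>j. \<delta>$j) T - \<gamma> * sum (\<lambda>j. \<delta>$j) S"
      using W' F i1 p1 by linarith
    then show ?thesis by (simp add: right_diff_distrib)
  qed
  have nCARD: "k < CARD('n)" using assms(2,3) by linarith
  show ?thesis
  proof (intro conjI impI)
    assume h: "\<delta>$i \<le> kth_largest \<delta> (k+1) \<and>
            zeta_CC A y \<gamma> k - ereal (\<gamma> * (\<delta>$i - kth_largest \<delta> k)) > ereal zbar"
    then have h2: "c - \<gamma> * (\<delta>$i - kth_largest \<delta> k) > zbar" using zCC by simp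
    show "z$i = 0"
    proof (rule ccontr)
      assume "z$i \<noteq> 0"
      then have iS: "i \<in> S" using z01 unfolding S_def by auto
      have "k \<le> card {j. (\<lambda>j. \<delta>$j) j \<ge> kth_largest \<delta> k}"
        using kth_ge[OF assms(2), of \<delta>] nCARD by simp
      then obtain T where T: "card T \<le> k"
        "sum (\<lambda>j. \<delta>$j) T - sum (\<lambda>j. \<delta>$j) S \<ge> kth_largest \<delta> k - \<delta>$i"
        using comb_case1[OF iS cardS] by blast
      have "\<gamma> * (kth_largest \<delta> k - \<delta>$i) \<le> \<gamma> * (sum (\<lambda>j. \<delta>$j) T - sum (\<lambda>j. \<delta>$j) S)"
        using T(2) g by (intro mult_left_mono) auto
      moreover have "\<gamma> * (kth_largest \<delta> k - \<delta>$i) = - (\<gamma> * (\<delta>$i - kth_largest \<delta> k))"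
        by (simp add: algebra_simps)
      ultimately show False using bound[OF T(1)] h2 Vle by linarith
    qed
  next
    assume h: "\<delta>$i \<ge> kth_largest \<delta> k \<and>
            zeta_CC A y \<gamma> k + ereal (\<gamma> * (\<delta>$i - kth_largest \<delta> (k+1))) > ereal zbar"
    then have h2: "c + \<gamma> * (\<delta>$i - kth_largest \<delta> (k+1)) > zbar" using zCC by simp
    show "z$i = 1"
    proof (rule ccontr)
      assume "z$i \<noteq> 1"
      then have iS: "i \<notin> S" unfolding S_def by auto
      have L0: "0 \<le> kth_largest \<delta> (k+1)" using kth_in[OF nCARD, of \<delta>] dj by auto
      have "card {j. (\<lambda>j. \<delta>$j) j > kth_largest \<delta> (k+1)} \<le> k"
        using kth_gt[OF nCARD, of \<delta>] by simp
      then obtain T where T: "card T \<le> k"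
        "sum (\<lambda>j. \<delta>$j) T - sum (\<lambda>j. \<delta>$j) S \<ge> \<delta>$i - kth_largest \<delta> (k+1)"
        using comb_case2[OF iS cardS _ L0] by blast
      have "\<gamma> * (\<delta>$i - kth_largest \<delta> (k+1)) \<le> \<gamma> * (sum (\<lambda>j. \<delta>$j) T - sum (\<lambda>j. \<delta>$j) S)"
        using T(2) g by (intro mult_left_mono) auto
      then show False using bound[OF T(1)] h2 Vle by linarith
    qed
  qed
qed

end
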